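(* Let $\tau$ be any substitution whose ll and rl graphs are subfixed. Then \[\mathcal{L}_2(\tau)=\{u\in\mathcal{A}^2 : \exists a\in\mathcal{A},\ u \text{ is a factor of } \tau(a)\}\cup\{u\in\mathcal{A}^2 : \exists a\in\mathcal{A},\ u \text{ is a factor of } \tau^2(a)\}.\]
   Context: Let $\mathcal{A}$ be a finite nonempty alphabet, $\mathcal{A}^2$ the set of words of length $2$. A word $u$ is a factor of $v$ if $v=w_1uw_2$ for some words $w_1,w_2$. A substitution is a map $\tau:\mathcal{A}\to\mathcal{A}^+$ (nonempty words), extended to a concatenation-respecting map on words. The language $\mathcal{L}(\tau)$ is the set of words that are factors of $\tau^n(a)$ for some letter $a$ and some $n\ge1$, and $\mathcal{L}_2(\tau)$ is its set of words of length $2$. The ll graph (resp. rl graph) is the directed graph on vertex set $\mathcal{A}$ with exactly one edge from each letter $a$ to the leftmost (resp. rightmost) letter of $\tau(a)$. Such a graph is subfixed if for every vertex $x$, either the edge leaving $x$ goes to $x$, or it goes to a vertex $y$ whose outgoing edge goes to $y$ itself. *)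

theory Defs
  imports Main
begin

definition is_substitution :: "('a \<Rightarrow> 'a list) \<Rightarrow> bool" where
  "is_substitution \<tau> \<longleftrightarrow> (\<forall>a. \<tau> a \<noteq> [])"

definition subst_word :: "('a \<Rightarrow> 'a list) \<Rightarrow> 'a list \<Rightarrow> 'a list" where
  "subst_word \<tau> w = concat (map \<tau> w)"

definition is_factor :: "'a list \<Rightarrow> 'a list \<Rightarrow> bool" where
  "is_factor u v \<longleftrightarrow> (\<exists>w1 w2. v = w1 @ u @ w2)"

definition lang :: "('a \<Rightarrow> 'a list) \<Rightarrow> 'a list set" where
  "lang \<tau> = {u. \<exists>a n. n \<ge> 1 \<and> is_factor u ((subst_word \<tau> ^^ n) [a])}"

definition lang2 :: "('a \<Rightarrow> 'a list) \<Rightarrow> 'a list set" where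
  "lang2 \<tau> = {u \<in> lang \<tau>. length u = 2}"

text \<open>ll graph: edge a -> leftmost letter of tau(a); rl graph: rightmost letter.\<close>
definition ll_edge :: "('a \<Rightarrow> 'a list) \<Rightarrow> 'a \<Rightarrow> 'a" where
  "ll_edge \<tau> a = hd (\<tau> a)"

definition rl_edge :: "('a \<Rightarrow> 'a list) \<Rightarrow> 'a \<Rightarrow> 'a" where
  "rl_edge \<tau> a = last (\<tau> a)"

definition subfixed :: "('a \<Rightarrow> 'a) \<Rightarrow> bool" where
  "subfixed g \<longleftrightarrow> (\<forall>x. g x = x \<or> g (g x) = g x)"

end

theory Submission
  imports Defs
begin

lemma fac_nil: "is_factor u [] \<longleftrightarrow> u = []"
  unfolding is_factor_def by auto

lemma fac_cons: "is_factor u (c#v) \<longleftrightarrow> (\<exists>w2. c#v = u @ w2) \<or> is_factor u v"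
  unfolding is_factor_def
  apply (rule iffI)
   apply (clarsimp simp: Cons_eq_append_conv)
   apply (metis Cons_eq_append_conv)
  apply (elim disjE exE)
   apply (metis append_Nil)
  apply (metis append_Cons)
  done

lemma fac2_cons: "is_factor [x,y] (c#v) \<longleftrightarrow> (c = x \<and> v \<noteq> [] \<and> hd v = y) \<or> is_factor [x,y] v"
  unfolding fac_cons by (cases v) auto

lemma fac2_append: "is_factor [x,y] (A@B) \<longleftrightarrow>
   is_factor [x,y] A \<or> is_factor [x,y] B \<or> (A \<noteq> [] \<and> B \<noteq> [] \<and> x = last A \<and> y = hd B)"
proof (induction A)
  case Nil
  then show ?case by (auto simp: fac_nil)
next
  case (Cons a A)
  show ?case
    unfolding append_Cons fac2_cons Cons.IH by (cases A) (auto simp: fac_nil)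
qed

lemma sw_cons: "subst_word \<tau> (c#w) = \<tau> c @ subst_word \<tau> w"
  by (simp add: subst_word_def)

lemma sw_single: "subst_word \<tau> [a] = \<tau> a"
  by (simp add: subst_word_def)

lemma sw_nil: "subst_word \<tau> [] = []"
  by (simp add: subst_word_def)

lemma decomp:
  assumes "is_substitution \<tau>" "is_factor [x,y] (subst_word \<tau> w)"
  shows "(\<exists>c. is_factor [x,y] (\<tau> c)) \<or> (\<exists>c d. is_factor [c,d] w \<and> x = last (\<tau> c) \<and> y = hd (\<tau> d))"
  using assms(2)
proof (induction w)
  case Nil
  then show ?case by (simp add: sw_nil fac_nil)
next
  case (Cons c w)
  have ne: "\<tau> c \<noteq> []" using assms(1) by (simp add: is_substitution_def)
  from Cons.prems have "is_factor [x,y] (\<tau> c) \<or> is_factor [x,y] (subst_word \<tau> w) \<or>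
     (subst_word \<tau> w \<noteq> [] \<and> x = last (\<tau> c) \<and> y = hd (subst_word \<tau> w))"
    using ne by (simp add: sw_cons fac2_append)
  then show ?case
  proof (elim disjE)
    assume "is_factor [x,y] (subst_word \<tau> w)"
    then have "(\<exists>c. is_factor [x,y] (\<tau> c)) \<or> (\<exists>c d. is_factor [c,d] w \<and> x = last (\<tau> c) \<and> y = hd (\<tau> d))"
      by (rule Cons.IH)
    moreover have "is_factor [a,b] w \<Longrightarrow> is_factor [a,b] (c#w)" for a b by (simp add: fac2_cons)
    ultimately show ?thesis by blast
  next
    assume h: "subst_word \<tau> w \<noteq> [] \<and> x = last (\<tau> c) \<and> y = hd (subst_word \<tau> w)"
    then obtain d w' where w: "w = d # w'" by (cases w) (auto simp: sw_nil)
    have "\<tau> d \<noteq> []" using assms(1) by (simp add: is_substitution_def)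
    then have "y = hd (\<tau> d)" using h w by (simp add: sw_cons)
    moreover have "is_factor [c,d] (c#w)" using w by (simp add: fac2_cons)
    ultimately show ?thesis using h by (intro disjI2 exI conjI) auto
  qed (intro disjI1, blast)
qed

lemma straddle:
  assumes "is_substitution \<tau>" "is_factor [c,d] w"
  shows "is_factor [last (\<tau> c), hd (\<tau> d)] (subst_word \<tau> w)"
  using assms(2)
proof (induction w)
  case Nil
  then show ?case by (simp add: fac_nil)
next
  case (Cons e w)
  have ne: "\<And>z. \<tau> z \<noteq> []" using assms(1) by (simp add: is_substitution_def)
  from Cons.prems consider "e = c" "w \<noteq> []" "hd w = d" | "is_factor [c,d] w"
    by (auto simp: fac2_cons)
  then show ?case
  proof cases
    case 1
    then obtain w' where w: "w = d # w'" by (cases w) auto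
    have h: "hd (subst_word \<tau> w) = hd (\<tau> d)" "subst_word \<tau> w \<noteq> []"
      using w ne[of d] by (simp_all add: sw_cons)
    show ?thesis unfolding sw_cons fac2_append using 1 h ne[of e] by simp
  next
    case 2
    then show ?thesis using Cons.IH unfolding sw_cons fac2_append by blast
  qed
qed

lemma idem:
  assumes "subfixed g" shows "g (g x) = g x"
  using assms unfolding subfixed_def by metis

theorem mainTheorem11:
  fixes \<tau> :: "'a::finite \<Rightarrow> 'a list"
  assumes "is_substitution \<tau>"
    and "subfixed (ll_edge \<tau>)"
    and "subfixed (rl_edge \<tau>)"
  shows "lang2 \<tau> =
    {u. length u = 2 \<and> (\<exists>a. is_factor u (\<tau> a))} \<union>
    {u. length u = 2 \<and> (\<exists>a. is_factor u (subst_word \<tau> (subst_word \<tau> [a])))}"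
proof -
  define T where "T = {u. length u = 2 \<and> (\<exists>a. is_factor u (\<tau> a))} \<union>
    {u. length u = 2 \<and> (\<exists>a. is_factor u (subst_word \<tau> (subst_word \<tau> [a])))}"
  have hh: "hd (\<tau> (hd (\<tau> x))) = hd (\<tau> x)" for x
    using idem[OF assms(2)] by (simp add: ll_edge_def)
  have ll: "last (\<tau> (last (\<tau> x))) = last (\<tau> x)" for x
    using idem[OF assms(3)] by (simp add: rl_edge_def)
  have T2: "[x,y] \<in> T \<longleftrightarrow> (\<exists>a. is_factor [x,y] (\<tau> a)) \<or> (\<exists>a. is_factor [x,y] (subst_word \<tau> (\<tau> a)))" for x y
    by (simp add: T_def sw_single)
  have clos: "[last (\<tau> c), hd (\<tau> d)] \<in> T" if "[c,d] \<in> T" for c d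
  proof -
    have F1: "[last (\<tau> c), hd (\<tau> d)] \<in> T" if "is_factor [c,d] (\<tau> a)" for a
      using straddle[OF assms(1) that] T2 by blast
    from that T2 consider a where "is_factor [c,d] (\<tau> a)" | a where "is_factor [c,d] (subst_word \<tau> (\<tau> a))"
      by blast
    then show ?thesis
    proof cases
      case 1 then show ?thesis using F1 by blast
    next
      case 2
      from decomp[OF assms(1) this] show ?thesis
      proof (elim disjE exE conjE)
        fix e assume "is_factor [c,d] (\<tau> e)" then show ?thesis using F1 by blast
      next
        fix e f assume "is_factor [e,f] (\<tau> a)" "c = last (\<tau> e)" "d = hd (\<tau> f)"
        then show ?thesis using hh ll \<open>[c,d] \<in> T\<close> by simp
      qed
    qed
  qed
  have stp: "\<forall>x y. is_factor [x,y] (subst_word \<tau> w) \<longrightarrow> [x,y] \<in> T"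
    if "\<forall>x y. is_factor [x,y] w \<longrightarrow> [x,y] \<in> T" for w
  proof (intro allI impI)
    fix x y assume "is_factor [x,y] (subst_word \<tau> w)"
    from decomp[OF assms(1) this] show "[x,y] \<in> T"
      using that clos T2 by blast
  qed
  have all: "\<forall>x y. is_factor [x,y] ((subst_word \<tau> ^^ n) [a]) \<longrightarrow> [x,y] \<in> T" if "n \<ge> 1" for n a
    using that
  proof (induction n rule: dec_induct)
    case base
    show ?case
    proof (intro allI impI)
      fix x y assume "is_factor [x,y] ((subst_word \<tau> ^^ 1) [a])"
      then have "is_factor [x,y] (\<tau> a)" by (simp add: sw_single)
      then show "[x,y] \<in> T" using T2 by blast
    qed
  next
    case (step n)
    then show ?case using stp by simp
  qed
  have len2: "length u = 2 \<longleftrightarrow> (\<exists>x y. u = [x,y])" for u :: "'a list"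
    by (cases u; cases "tl u") (auto simp: numeral_2_eq_2)
  have "lang2 \<tau> = T"
  proof
    show "lang2 \<tau> \<subseteq> T"
    proof
      fix u assume "u \<in> lang2 \<tau>"
      then obtain a n where "length u = 2" "n \<ge> 1" "is_factor u ((subst_word \<tau> ^^ n) [a])"
        by (auto simp: lang2_def lang_def)
      then obtain x y where "u = [x,y]" using len2 by blast
      then show "u \<in> T" using all \<open>n \<ge> 1\<close> \<open>is_factor u ((subst_word \<tau> ^^ n) [a])\<close> by blast
    qed
  next
    show "T \<subseteq> lang2 \<tau>"
    proof
      fix u assume "u \<in> T"
      then consider a where "length u = 2" "is_factor u (\<tau> a)"
        | a where "length u = 2" "is_factor u (subst_word \<tau> (subst_word \<tau> [a]))"
        by (auto simp: T_def)
      then show "u \<in> lang2 \<tau>"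
      proof cases
        case 1
        then have "is_factor u ((subst_word \<tau> ^^ 1) [a])" by (simp add: sw_single)
        then show ?thesis using 1 unfolding lang2_def lang_def by blast
      next
        case 2
        then have "is_factor u ((subst_word \<tau> ^^ 2) [a])" by (simp add: numeral_2_eq_2)
        then show ?thesis using 2 unfolding lang2_def lang_def
          by (smt (verit) le_add2 mem_Collect_eq nat_1_add_1)
      qed
    qed
  qed
  then show ?thesis unfolding T_def .
qed

end
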